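(* Let $\Delta=\mathrm{conv}\{0,\,e_1+e_2,\,e_1+e_3,\,e_2+e_3\}\subset\mathbb{R}^3$, and let $\alpha,\beta,\gamma$ be real numbers with $\tfrac12\le\alpha,\beta,\gamma<1$ and $\alpha+\beta+\gamma=2$. Let $$\Lambda=\mathrm{span}_{\mathbb{Z}}\left\{\begin{pmatrix}-\alpha\\ \beta\\ \gamma\end{pmatrix},\begin{pmatrix}\alpha\\ -\beta\\ \gamma\end{pmatrix},\begin{pmatrix}\alpha\\ \beta\\ -\gamma\end{pmatrix}\right\}.$$ Then $\Delta$ is lattice complete with respect to $\Lambda$.
   Context: $e_1,e_2,e_3$ are the standard basis vectors of $\mathbb{R}^3$. For a $3$-dimensional lattice $\Lambda$ (discrete subgroup spanning $\mathbb{R}^3$) and a convex body $C$ (compact convex, non-empty interior): a segment $[a,b]$ is a lattice segment if $b-a$ is parallel to a nonzero vector of $\Lambda$, with lattice length $|b-a|/|v|$ where $v$ generates $\Lambda\cap\mathrm{span}\{b-a\}$ and is a positive multiple of $b-a$; $\mathrm{diam}_\Lambda(C)$ is the maximum lattice length of a lattice segment in $C$; $C$ is lattice complete if no convex body $C'\supsetneq C$ has $\mathrm{diam}_\Lambda(C')=\mathrm{diam}_\Lambda(C)$. *)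

theory Defs
  imports "HOL-Analysis.Analysis"
begin

definition e :: "3 \<Rightarrow> real^3" where
  "e i = axis i 1"

definition is_lattice :: "(real^3) set \<Rightarrow> bool" where
  "is_lattice L \<longleftrightarrow> 0 \<in> L \<and> (\<forall>x\<in>L. \<forall>y\<in>L. x + y \<in> L \<and> x - y \<in> L)
     \<and> (\<forall>x\<in>L. \<exists>r>0. L \<inter> ball x r = {x}) \<and> span L = UNIV"

definition int_span3 :: "real^3 \<Rightarrow> real^3 \<Rightarrow> real^3 \<Rightarrow> (real^3) set" where
  "int_span3 u v w = {of_int i *\<^sub>R u + of_int j *\<^sub>R v + of_int k *\<^sub>R w | i j k. True}"

definition convex_body :: "(real^3) set \<Rightarrow> bool" where
  "convex_body C \<longleftrightarrow> compact C \<and> convex C \<and> interior C \<noteq> {}"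

text \<open>\<open>[a,b]\<close> is a lattice segment: \<open>b - a\<close> is parallel to a nonzero lattice vector
  (we require \<open>a \<noteq> b\<close>, so that the lattice length is well defined).\<close>
definition lattice_segment :: "(real^3) set \<Rightarrow> real^3 \<Rightarrow> real^3 \<Rightarrow> bool" where
  "lattice_segment L a b \<longleftrightarrow> a \<noteq> b \<and> (\<exists>v\<in>L. v \<noteq> 0 \<and> (\<exists>t::real. b - a = t *\<^sub>R v))"

definition primitive_dir :: "(real^3) set \<Rightarrow> real^3 \<Rightarrow> real^3" where
  "primitive_dir L d = (THE v. v \<in> L \<and> (\<exists>c>0. v = c *\<^sub>R d) \<and>
       L \<inter> span {d} = range (\<lambda>k::int. of_int k *\<^sub>R v))"

definition lattice_length :: "(real^3) set \<Rightarrow> real^3 \<Rightarrow> real^3 \<Rightarrow> real" where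
  "lattice_length L a b = norm (b - a) / norm (primitive_dir L (b - a))"

definition lattice_diam :: "(real^3) set \<Rightarrow> (real^3) set \<Rightarrow> real" where
  "lattice_diam L C = Sup {lattice_length L a b | a b.
       lattice_segment L a b \<and> closed_segment a b \<subseteq> C}"

definition lattice_complete :: "(real^3) set \<Rightarrow> (real^3) set \<Rightarrow> bool" where
  "lattice_complete L C \<longleftrightarrow>
     \<not> (\<exists>C'. convex_body C' \<and> C \<subset> C' \<and> lattice_diam L C' = lattice_diam L C)"

end

theory Submission
  imports Defs
begin

definition lv :: "real \<Rightarrow> real \<Rightarrow> real \<Rightarrow> int \<Rightarrow> int \<Rightarrow> int \<Rightarrow> real^3" where
  "lv a b c A B C = vector [a * of_int A, b * of_int B, c * of_int C]"

abbreviation LL :: "real \<Rightarrow> real \<Rightarrow> real \<Rightarrow> (real^3) set" where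
  "LL a b c \<equiv> int_span3 (vector [-a, b, c]) (vector [a, -b, c]) (vector [a, b, -c])"

lemma memL:
  "x \<in> int_span3 (vector [-a, b, c]) (vector [a, -b, c]) (vector [a, b, -c]) \<longleftrightarrow>
   (\<exists>A B C. even (A+B) \<and> even (B+C) \<and> x = lv a b c A B C)"
proof
  assume "x \<in> int_span3 (vector [-a, b, c]) (vector [a, -b, c]) (vector [a, b, -c])"
  then obtain i j k :: int where x: "x = of_int i *\<^sub>R vector [-a, b, c] + of_int j *\<^sub>R vector [a, -b, c] + of_int k *\<^sub>R vector [a, b, -c]"
    unfolding int_span3_def by blast
  show "\<exists>A B C. even (A+B) \<and> even (B+C) \<and> x = lv a b c A B C"
    apply (rule exI[of _ "-i+j+k"], rule exI[of _ "i-j+k"], rule exI[of _ "i+j-k"])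
    apply (simp add: x lv_def vec_eq_iff forall_3 algebra_simps)
    done
next
  assume "\<exists>A B C. even (A+B) \<and> even (B+C) \<and> x = lv a b c A B C"
  then obtain A B C where "even (A+B)" "even (B+C)" and x: "x = lv a b c A B C" by blast
  then obtain k i where k: "A + B = 2*k" and i: "B + C = 2*i" by (metis evenE)
  have x2: "x = lv a b c (2*k-B) B (2*i-B)" using k i x by (smt (verit))
  show "x \<in> int_span3 (vector [-a, b, c]) (vector [a, -b, c]) (vector [a, b, -c])"
    unfolding int_span3_def
    apply (rule CollectI, rule exI[of _ i], rule exI[of _ "k+i-B"], rule exI[of _ k])
    apply (simp add: x2 lv_def vec_eq_iff forall_3 algebra_simps)
    done
qed

lemma lv_in: "even (A+B) \<Longrightarrow> even (B+C) \<Longrightarrow> lv a b c A B C \<in> LL a b c"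
  unfolding memL by blast

lemma cyclic:
  fixes L :: "(real^3) set"
  assumes sub: "\<forall>x\<in>L. \<forall>y\<in>L. x - y \<in> L" and sc: "\<forall>x\<in>L. \<forall>k::int. of_int k *\<^sub>R x \<in> L"
    and w: "w \<in> L" and N: "(N::nat) > 0" and disc: "\<forall>r. r *\<^sub>R w \<in> L \<longrightarrow> (\<exists>j::int. r = j / N)"
  shows "\<exists>r0>0. \<forall>r::real. r *\<^sub>R w \<in> L \<longleftrightarrow> (\<exists>k::int. r = of_int k * r0)"
proof -
  define K where "K = {k::nat. 0<k \<and> (real k / N) *\<^sub>R w \<in> L}"
  have NK: "N \<in> K" using N w by (simp add: K_def)
  define k0 where "k0 = (LEAST k. k \<in> K)"
  have k0K: "k0 \<in> K" unfolding k0_def using NK by (rule LeastI)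
  have k0min: "\<And>k. k < k0 \<Longrightarrow> k \<notin> K" unfolding k0_def by (rule not_less_Least)
  define r0 where "r0 = real k0 / N"
  have r0pos: "r0 > 0" using k0K N by (simp add: K_def r0_def)
  have r0L: "r0 *\<^sub>R w \<in> L" using k0K by (simp add: K_def r0_def)
  have "r *\<^sub>R w \<in> L \<longleftrightarrow> (\<exists>k::int. r = of_int k * r0)" for r
  proof
    assume rL: "r *\<^sub>R w \<in> L"
    then obtain j :: int where j: "r = j / N" using disc by blast
    define q where "q = j div int k0"
    define m where "m = j mod int k0"
    have k0p: "k0 > 0" using k0K by (simp add: K_def)
    have jqm: "j = q * int k0 + m" unfolding q_def m_def by simp
    have m0: "0 \<le> m" "m < int k0" using k0p unfolding m_def by auto
    have "(real_of_int m / N) *\<^sub>R w = r *\<^sub>R w - of_int q *\<^sub>R (r0 *\<^sub>R w)"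
    proof -
      have "real_of_int m / N = r - of_int q * r0"
        using N by (simp add: j jqm r0_def field_simps)
      then have "(real_of_int m / N) *\<^sub>R w = (r - of_int q * r0) *\<^sub>R w" by simp
      then show ?thesis by (simp add: scaleR_diff_left)
    qed
    also have "\<dots> \<in> L" using sub sc rL r0L by blast
    finally have mL: "(real_of_int m / N) *\<^sub>R w \<in> L" .
    have "m = 0"
    proof (rule ccontr)
      assume "m \<noteq> 0"
      then have "nat m \<in> K" using mL m0 by (simp add: K_def)
      moreover have "nat m < k0" using m0 by linarith
      ultimately show False using k0min by blast
    qed
    then have "r = q * r0" using N by (simp add: j jqm r0_def field_simps)
    then show "\<exists>k::int. r = k * r0" by blast
  next
    assume "\<exists>k::int. r = k * r0"
    then obtain k :: int where "r = k * r0" by blast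
    then have "r *\<^sub>R w = of_int k *\<^sub>R (r0 *\<^sub>R w)" by simp
    then show "r *\<^sub>R w \<in> L" using sc r0L by metis
  qed
  then show ?thesis using r0pos by blast
qed

definition prim_spec :: "(real^3) set \<Rightarrow> real^3 \<Rightarrow> real^3 \<Rightarrow> bool" where
  "prim_spec L d v \<longleftrightarrow> v \<in> L \<and> (\<exists>c>0. v = c *\<^sub>R d) \<and>
       L \<inter> span {d} = range (\<lambda>k::int. of_int k *\<^sub>R v)"

lemma prim_unique:
  assumes "d \<noteq> 0" "prim_spec L d v" "prim_spec L d v'"
  shows "v = v'"
proof -
  obtain c where c: "c > 0" "v = c *\<^sub>R d" using assms(2) by (auto simp: prim_spec_def)
  obtain c' where c': "c' > 0" "v' = c' *\<^sub>R d" using assms(3) by (auto simp: prim_spec_def)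
  have "v' \<in> L \<inter> span {d}" using assms(3) c' by (auto simp: prim_spec_def span_singleton)
  then obtain k :: int where k: "v' = of_int k *\<^sub>R v" using assms(2) by (auto simp: prim_spec_def)
  have "c' = of_int k * c" using k c c' assms(1) by (simp add: scaleR_cancel_right)
  then have kpos: "k > 0" using c c' by (smt (verit) mult_nonpos_nonneg of_int_le_0_iff) 
  have "v \<in> L \<inter> span {d}" using assms(2) c by (auto simp: prim_spec_def span_singleton)
  then obtain k' :: int where k': "v = of_int k' *\<^sub>R v'" using assms(3) by (auto simp: prim_spec_def)
  have "c = of_int k' * c'" using k' c c' assms(1) by (simp add: scaleR_cancel_right)
  then have "c = of_int k' * of_int k * c" using \<open>c' = of_int k * c\<close> by simp
  then have "of_int (k' * k) = (1::real)" using c by simp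
  then have "k' * k = 1" by linarith
  then have "k = 1" using kpos by (simp add: zmult_eq_1_iff)
  then show ?thesis using k by simp
qed

lemma prim_exists:
  fixes L :: "(real^3) set"
  assumes sub: "\<forall>x\<in>L. \<forall>y\<in>L. x - y \<in> L" and sc: "\<forall>x\<in>L. \<forall>k::int. of_int k *\<^sub>R x \<in> L"
    and w: "w \<in> L" "w \<noteq> 0" and t: "t > 0" "d = t *\<^sub>R w"
    and N: "(N::nat) > 0" and disc: "\<forall>r. r *\<^sub>R w \<in> L \<longrightarrow> (\<exists>j::int. r = j / N)"
  shows "prim_spec L d (primitive_dir L d)"
proof -
  obtain r0 where r0: "r0 > 0" "\<And>r. r *\<^sub>R w \<in> L \<longleftrightarrow> (\<exists>k::int. r = of_int k * r0)"
    using cyclic[OF sub sc w(1) N disc] by blast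
  define P where "P = r0 *\<^sub>R w"
  have d0: "d \<noteq> 0" using t w by simp
  have PL: "P \<in> L" unfolding P_def using r0(2)[of r0] by (metis mult_1 of_int_1)
  have Pd: "P = (r0 / t) *\<^sub>R d" using t by (simp add: P_def)
  have "L \<inter> span {d} = range (\<lambda>k::int. of_int k *\<^sub>R P)"
  proof (intro equalityI subsetI)
    fix x assume "x \<in> L \<inter> span {d}"
    then obtain s where xL: "x \<in> L" and xs: "x = s *\<^sub>R d" by (auto simp: span_singleton)
    have "(s * t) *\<^sub>R w \<in> L" using xL xs t by simp
    then obtain k :: int where "s * t = of_int k * r0" using r0(2) by blast
    then have "x = of_int k *\<^sub>R P" using xs t by (simp add: P_def)
    then show "x \<in> range (\<lambda>k::int. of_int k *\<^sub>R P)" by blast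
  next
    fix x assume "x \<in> range (\<lambda>k::int. of_int k *\<^sub>R P)"
    then obtain k :: int where xk: "x = of_int k *\<^sub>R P" by blast
    have "x \<in> L" using xk PL sc by blast
    moreover have "x = (of_int k * (r0 / t)) *\<^sub>R d" using xk Pd by simp
    then have "x \<in> span {d}" by (auto simp: span_singleton)
    ultimately show "x \<in> L \<inter> span {d}" by blast
  qed
  then have sP: "prim_spec L d P" using PL Pd r0 t unfolding prim_spec_def
    by (metis divide_pos_pos)
  have "primitive_dir L d = (THE v. prim_spec L d v)"
    by (simp add: primitive_dir_def prim_spec_def)
  also have "\<dots> = P"
    by (rule the_equality[where P="prim_spec L d", OF sP]) (use prim_unique[OF d0 _ sP] in blast)
  finally show ?thesis using sP by simp
qed


lemma LL_sub: "\<forall>x\<in>LL a b c. \<forall>y\<in>LL a b c. x - y \<in> LL a b c"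
proof (intro ballI)
  fix x y assume "x \<in> LL a b c" "y \<in> LL a b c"
  then obtain A B C A' B' C' where p: "even (A+B)" "even (B+C)" and x: "x = lv a b c A B C"
    and p': "even (A'+B')" "even (B'+C')" and y: "y = lv a b c A' B' C'" unfolding memL by blast
  have e1: "even ((A-A') + (B-B'))" using p(1) p'(1) by presburger
  have e2: "even ((B-B') + (C-C'))" using p(2) p'(2) by presburger
  have "x - y = lv a b c (A-A') (B-B') (C-C')"
    by (simp add: x y lv_def vec_eq_iff forall_3 algebra_simps)
  then show "x - y \<in> LL a b c" unfolding memL using e1 e2 by blast
qed

lemma LL_sc: "\<forall>x\<in>LL a b c. \<forall>k::int. of_int k *\<^sub>R x \<in> LL a b c"
proof (intro ballI allI)
  fix x and k :: int assume "x \<in> LL a b c"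
  then obtain A B C where p: "even (A+B)" "even (B+C)" and x: "x = lv a b c A B C" unfolding memL by blast
  have e1: "even (k*A + k*B)" using p(1) by (simp add: distrib_left[symmetric])
  have e2: "even (k*B + k*C)" using p(2) by (simp add: distrib_left[symmetric])
  have "of_int k *\<^sub>R x = lv a b c (k*A) (k*B) (k*C)"
    by (simp add: x lv_def vec_eq_iff forall_3 algebra_simps)
  then show "of_int k *\<^sub>R x \<in> LL a b c" unfolding memL using e1 e2 by blast
qed

lemma LL_disc:
  assumes "a > 0" "b > 0" "c > 0" "w \<in> LL a b c" "w \<noteq> 0"
  shows "\<exists>N::nat. N > 0 \<and> (\<forall>r. r *\<^sub>R w \<in> LL a b c \<longrightarrow> (\<exists>j::int. r = j / N))"
proof -
  obtain A B C where w: "w = lv a b c A B C" using assms(4) unfolding memL by blast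
  have key: "\<exists>N::nat. N > 0 \<and> (\<forall>r::real. (\<exists>j'::int. r * of_int M = of_int j') \<longrightarrow> (\<exists>j::int. r = j / N))"
    if "M \<noteq> 0" for M :: int
  proof (intro exI[of _ "nat \<bar>M\<bar>"] conjI allI impI)
    show "nat \<bar>M\<bar> > 0" using that by simp
  next
    fix r :: real assume "\<exists>j'::int. r * of_int M = of_int j'"
    then obtain j' :: int where j': "r * of_int M = of_int j'" by blast
    show "\<exists>j::int. r = j / (nat \<bar>M\<bar>)"
    proof (intro exI[of _ "sgn M * j'"])
      have "real (nat \<bar>M\<bar>) = \<bar>of_int M\<bar>" by simp
      moreover have "r * \<bar>of_int M\<bar> = of_int (sgn M * j')"
        using j' that by (cases "M > 0") (auto simp: abs_if)
      ultimately show "r = of_int (sgn M * j') / real (nat \<bar>M\<bar>)"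
        using that by (simp add: field_simps)
    qed
  qed
  have "A \<noteq> 0 \<or> B \<noteq> 0 \<or> C \<noteq> 0" using assms(5) w by (auto simp: lv_def vec_eq_iff forall_3)
  then show ?thesis
  proof (elim disjE)
    assume "A \<noteq> 0"
    then obtain N :: nat where N: "N > 0" "\<forall>r::real. (\<exists>j'::int. r * of_int A = of_int j') \<longrightarrow> (\<exists>j::int. r = j / N)"
      using key by blast
    show ?thesis
    proof (intro exI[of _ N] conjI allI impI)
      fix r assume "r *\<^sub>R w \<in> LL a b c"
      then obtain A' B' C' where "r *\<^sub>R w = lv a b c A' B' C'" unfolding memL by blast
      then have "r * (a * of_int A) = a * of_int A'" by (simp add: w lv_def vec_eq_iff forall_3)
      then have "r * of_int A = of_int A'" using assms(1) by (simp add: algebra_simps)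
      then show "\<exists>j::int. r = j / N" using N by blast
    qed (use N in auto)
  next
    assume "B \<noteq> 0"
    then obtain N :: nat where N: "N > 0" "\<forall>r::real. (\<exists>j'::int. r * of_int B = of_int j') \<longrightarrow> (\<exists>j::int. r = j / N)"
      using key by blast
    show ?thesis
    proof (intro exI[of _ N] conjI allI impI)
      fix r assume "r *\<^sub>R w \<in> LL a b c"
      then obtain A' B' C' where "r *\<^sub>R w = lv a b c A' B' C'" unfolding memL by blast
      then have "r * (b * of_int B) = b * of_int B'" by (simp add: w lv_def vec_eq_iff forall_3)
      then have "r * of_int B = of_int B'" using assms(2) by (simp add: algebra_simps)
      then show "\<exists>j::int. r = j / N" using N by blast
    qed (use N in auto)
  next
    assume "C \<noteq> 0"
    then obtain N :: nat where N: "N > 0" "\<forall>r::real. (\<exists>j'::int. r * of_int C = of_int j') \<longrightarrow> (\<exists>j::int. r = j / N)"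
      using key by blast
    show ?thesis
    proof (intro exI[of _ N] conjI allI impI)
      fix r assume "r *\<^sub>R w \<in> LL a b c"
      then obtain A' B' C' where "r *\<^sub>R w = lv a b c A' B' C'" unfolding memL by blast
      then have "r * (c * of_int C) = c * of_int C'" by (simp add: w lv_def vec_eq_iff forall_3)
      then have "r * of_int C = of_int C'" using assms(3) by (simp add: algebra_simps)
      then show "\<exists>j::int. r = j / N" using N by blast
    qed (use N in auto)
  qed
qed

lemma LL_prim:
  assumes "a > 0" "b > 0" "c > 0" "lattice_segment (LL a b c) x y"
  shows "prim_spec (LL a b c) (y - x) (primitive_dir (LL a b c) (y - x))"
proof -
  have "x \<noteq> y \<and> (\<exists>v\<in>LL a b c. v \<noteq> 0 \<and> (\<exists>t. y - x = t *\<^sub>R v))"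
    using assms(4) unfolding lattice_segment_def .
  then obtain v t where v: "v \<in> LL a b c" "v \<noteq> 0" "y - x = t *\<^sub>R v" "x \<noteq> y"
    by (elim conjE bexE exE)
  have t0: "t \<noteq> 0"
  proof
    assume "t = 0"
    then have "y - x = 0" using v(3) by simp
    then show False using v(4) by simp
  qed
  show ?thesis
  proof (cases "t > 0")
    case True
    obtain N :: nat where N0: "real N > 0" and N1: "\<forall>r. r *\<^sub>R v \<in> LL a b c \<longrightarrow> (\<exists>j::int. r = j / N)"
      using LL_disc[OF assms(1-3) v(1,2)] by (elim exE conjE)
    show ?thesis by (rule prim_exists[OF LL_sub LL_sc v(1,2) True v(3) _ N1]) (use N0 in simp)
  next
    case False
    have "\<forall>k::int. of_int k *\<^sub>R v \<in> LL a b c" using LL_sc v(1) by (rule bspec)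
    then have "of_int (-1) *\<^sub>R v \<in> LL a b c" by (rule spec)
    then have mv: "-v \<in> LL a b c" by simp
    have mv0: "-v \<noteq> 0" using v(2) by simp
    obtain N :: nat where N0: "real N > 0" and N1: "\<forall>r. r *\<^sub>R (-v) \<in> LL a b c \<longrightarrow> (\<exists>j::int. r = j / N)"
      using LL_disc[OF assms(1-3) mv mv0] by (elim exE conjE)
    have tp: "-t > 0" using False t0 by simp
    have deq: "y - x = (-t) *\<^sub>R (-v)" using v(3) by simp
    show ?thesis by (rule prim_exists[OF LL_sub LL_sc mv mv0 tp deq _ N1]) (use N0 in simp)
  qed
qed

lemma LL_length:
  assumes "a > 0" "b > 0" "c > 0" "lattice_segment (LL a b c) x y"
  shows "\<exists>P s. P \<in> LL a b c \<and> P \<noteq> 0 \<and> s > 0 \<and> y - x = s *\<^sub>R P \<and> lattice_length (LL a b c) x y = s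
     \<and> (\<forall>w s'. w \<in> LL a b c \<longrightarrow> s' > 0 \<longrightarrow> y - x = s' *\<^sub>R w \<longrightarrow> s' \<le> s)"
proof -
  define L where "L = LL a b c"
  define P where "P = primitive_dir L (y - x)"
  have sp: "prim_spec L (y - x) P" using LL_prim[OF assms] unfolding L_def P_def .
  then have PL: "P \<in> L" and spc: "\<exists>c>0. P = c *\<^sub>R (y - x)"
    and spr: "L \<inter> span {y - x} = range (\<lambda>k::int. of_int k *\<^sub>R P)"
    unfolding prim_spec_def by blast+
  have "x \<noteq> y" using assms(4) unfolding lattice_segment_def by (elim conjE)
  then have d0: "y - x \<noteq> 0" by simp
  obtain k where k: "k > 0" "P = k *\<^sub>R (y - x)" using spc by (elim exE conjE)
  have P0: "P \<noteq> 0" using k d0 by simp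
  have ds: "y - x = (1/k) *\<^sub>R P" using k by simp
  have nP: "norm P = k * norm (y - x)" using k(1) by (subst k(2)) simp
  have "lattice_length L x y = norm (y - x) / norm P" by (simp add: lattice_length_def P_def)
  also have "\<dots> = 1/k" using nP d0 k(1) by simp
  finally have len: "lattice_length L x y = 1/k" .
  have mx: "s' \<le> 1/k" if w: "w \<in> L" "s' > 0" "y - x = s' *\<^sub>R w" for w s'
  proof -
    have "w = (1/s') *\<^sub>R (y - x)" using w by simp
    then have "w \<in> span {y - x}" unfolding span_singleton by (rule image_eqI) simp
    then have "w \<in> range (\<lambda>k::int. of_int k *\<^sub>R P)" using w(1) spr by blast
    then obtain j :: int where j: "w = of_int j *\<^sub>R P" by (elim rangeE)
    have "(1/k) *\<^sub>R P = (s' * of_int j) *\<^sub>R P" using ds w(3) j by (metis scaleR_scaleR)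
    then have e: "1/k = s' * of_int j" using P0 scaleR_cancel_right by blast
    have "0 < 1/k" using k by simp
    then have "0 < s' * of_int j" using e by simp
    then have "j > 0" using w(2) by (simp add: zero_less_mult_iff)
    then have "of_int j \<ge> (1::real)" by simp
    then have "s' * 1 \<le> s' * of_int j" using w(2) by (intro mult_left_mono) auto
    then show ?thesis using e by simp
  qed
  have "P \<in> LL a b c \<and> P \<noteq> 0 \<and> 1/k > 0 \<and> y - x = (1/k) *\<^sub>R P \<and> lattice_length (LL a b c) x y = 1/k
     \<and> (\<forall>w s'. w \<in> LL a b c \<longrightarrow> s' > 0 \<longrightarrow> y - x = s' *\<^sub>R w \<longrightarrow> s' \<le> 1/k)"
    using PL P0 k(1) ds len mx unfolding L_def by simp
  then show ?thesis by blast
qed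

lemma abs_ge_mult:
  fixes a :: real and A :: int
  assumes "a \<ge> 0" "\<bar>A\<bar> \<ge> n"
  shows "\<bar>a * of_int A\<bar> \<ge> a * of_int n"
proof -
  have "of_int n \<le> \<bar>(of_int A::real)\<bar>" using assms(2) by linarith
  then have "a * of_int n \<le> a * \<bar>of_int A\<bar>" using assms(1) by (rule mult_left_mono)
  then show ?thesis using assms(1) by (simp add: abs_mult)
qed

lemma LL_norm:
  assumes "1/2 \<le> a" "1/2 \<le> b" "1/2 \<le> c" "P \<in> LL a b c" "P \<noteq> 0"
  shows "norm P \<ge> 1/2"
proof -
  obtain A B C where P: "P = lv a b c A B C" using assms(4) unfolding memL by blast
  have "A \<noteq> 0 \<or> B \<noteq> 0 \<or> C \<noteq> 0" using assms(5) P by (auto simp: lv_def vec_eq_iff forall_3)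
  moreover have "\<bar>P$1\<bar> \<le> norm P" "\<bar>P$2\<bar> \<le> norm P" "\<bar>P$3\<bar> \<le> norm P" by (rule component_le_norm_cart)+
  moreover have "\<bar>a * of_int A\<bar> \<ge> 1/2" if "A \<noteq> 0"
  proof -
    have "\<bar>A\<bar> \<ge> 1" using that by linarith
    then have "\<bar>a * of_int A\<bar> \<ge> a * of_int 1" by (intro abs_ge_mult) (use assms(1) in auto)
    then show ?thesis using assms(1) by simp
  qed
  moreover have "\<bar>b * of_int B\<bar> \<ge> 1/2" if "B \<noteq> 0"
  proof -
    have "\<bar>B\<bar> \<ge> 1" using that by linarith
    then have "\<bar>b * of_int B\<bar> \<ge> b * of_int 1" by (intro abs_ge_mult) (use assms(2) in auto)
    then show ?thesis using assms(2) by simp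
  qed
  moreover have "\<bar>c * of_int C\<bar> \<ge> 1/2" if "C \<noteq> 0"
  proof -
    have "\<bar>C\<bar> \<ge> 1" using that by linarith
    then have "\<bar>c * of_int C\<bar> \<ge> c * of_int 1" by (intro abs_ge_mult) (use assms(3) in auto)
    then show ?thesis using assms(3) by simp
  qed
  ultimately show ?thesis by (auto simp: P lv_def)
qed

definition Hin :: "real^3 \<Rightarrow> bool" where
  "Hin x \<longleftrightarrow> x$1 + x$2 + x$3 \<le> 2 \<and> 0 \<le> x$2 + x$3 - x$1 \<and> 0 \<le> x$1 + x$3 - x$2 \<and> 0 \<le> x$1 + x$2 - x$3"

lemma e_vals: "e 1 + e 2 = vector [1,1,0]" "e 1 + e 3 = vector [1,0,1]" "e 2 + e 3 = vector [0,1,1]"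
  by (simp_all add: vec_eq_iff forall_3 e_def axis_def)

lemma Hin_convex: "convex {x. Hin x}"
proof (rule convexI)
  fix x y :: "real^3" and u v :: real
  assume hx: "x \<in> {x. Hin x}" and hy: "y \<in> {x. Hin x}" and uv: "0 \<le> u" "0 \<le> v" "u + v = 1"
  have h: "x $ 1 + x $ 2 + x $ 3 \<le> 2" "0 \<le> x $ 2 + x $ 3 - x $ 1" "0 \<le> x $ 1 + x $ 3 - x $ 2" "0 \<le> x $ 1 + x $ 2 - x $ 3"
    "y $ 1 + y $ 2 + y $ 3 \<le> 2" "0 \<le> y $ 2 + y $ 3 - y $ 1" "0 \<le> y $ 1 + y $ 3 - y $ 2" "0 \<le> y $ 1 + y $ 2 - y $ 3"
    using hx hy by (auto simp: Hin_def)
  have "u * (x $ 1 + x $ 2 + x $ 3) \<le> u * 2" using h uv by (intro mult_left_mono) auto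
  moreover have "v * (y $ 1 + y $ 2 + y $ 3) \<le> v * 2" using h uv by (intro mult_left_mono) auto
  moreover have "0 \<le> u * (x $ 2 + x $ 3 - x $ 1)" "0 \<le> u * (x $ 1 + x $ 3 - x $ 2)" "0 \<le> u * (x $ 1 + x $ 2 - x $ 3)"
    using h uv by simp_all
  moreover have "0 \<le> v * (y $ 2 + y $ 3 - y $ 1)" "0 \<le> v * (y $ 1 + y $ 3 - y $ 2)" "0 \<le> v * (y $ 1 + y $ 2 - y $ 3)"
    using h uv by simp_all
  ultimately have "u * x $ 1 + v * y $ 1 + (u * x $ 2 + v * y $ 2) + (u * x $ 3 + v * y $ 3) \<le> 2 \<and>
       0 \<le> u * x $ 2 + v * y $ 2 + (u * x $ 3 + v * y $ 3) - (u * x $ 1 + v * y $ 1) \<and>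
       0 \<le> u * x $ 1 + v * y $ 1 + (u * x $ 3 + v * y $ 3) - (u * x $ 2 + v * y $ 2) \<and>
       0 \<le> u * x $ 1 + v * y $ 1 + (u * x $ 2 + v * y $ 2) - (u * x $ 3 + v * y $ 3)"
    using uv by (simp add: algebra_simps)
  then show "u *\<^sub>R x + v *\<^sub>R y \<in> {x. Hin x}" by (simp add: Hin_def)
qed

lemma Dl_Hin: "x \<in> convex hull {0, e 1 + e 2, e 1 + e 3, e 2 + e 3} \<Longrightarrow> Hin x"
proof -
  assume "x \<in> convex hull {0, e 1 + e 2, e 1 + e 3, e 2 + e 3}"
  moreover have "convex hull {0, e 1 + e 2, e 1 + e 3, e 2 + e 3} \<subseteq> {x. Hin x}"
    apply (rule hull_minimal)
     apply (auto simp: e_vals Hin_def)[1]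
    apply (rule Hin_convex)
    done
  ultimately show "Hin x" by blast
qed

lemma Hin_Dl: "Hin x \<Longrightarrow> x \<in> convex hull {0, e 1 + e 2, e 1 + e 3, e 2 + e 3}"
proof -
  assume h: "Hin x"
  define \<sigma> where "\<sigma> = (x$1 + x$2 + x$3) / 2"
  have s01: "0 \<le> \<sigma>" "\<sigma> \<le> 1" using h by (auto simp: Hin_def \<sigma>_def)
  have eq: "convex hull {0, e 1 + e 2, e 1 + e 3, e 2 + e 3} =
     {x. \<exists>u\<ge>0. \<exists>v\<ge>0. \<exists>b. (u + v = 1) \<and> b \<in> (convex hull {e 1 + e 2, e 1 + e 3, e 2 + e 3}) \<and> (x = u *\<^sub>R 0 + v *\<^sub>R b)}"
    by (rule convex_hull_insert) simp
  show ?thesis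
  proof (cases "\<sigma> = 0")
    case True
    then have "x = 0" using h by (auto simp: Hin_def \<sigma>_def vec_eq_iff forall_3)
    then show ?thesis by (simp add: hull_inc)
  next
    case False
    then have sp: "\<sigma> > 0" using s01 by simp
    define l1 where "l1 = (x$1 + x$2 - x$3) / 2 / \<sigma>"
    define l2 where "l2 = (x$1 + x$3 - x$2) / 2 / \<sigma>"
    define l3 where "l3 = (x$2 + x$3 - x$1) / 2 / \<sigma>"
    define m where "m = l1 *\<^sub>R (e 1 + e 2) + l2 *\<^sub>R (e 1 + e 3) + l3 *\<^sub>R (e 2 + e 3)"
    have "m \<in> convex hull {e 1 + e 2, e 1 + e 3, e 2 + e 3}"
      unfolding convex_hull_3 m_def
    proof (rule CollectI, rule exI[of _ l1], rule exI[of _ l2], rule exI[of _ l3], intro conjI refl)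
      show "0 \<le> l1" "0 \<le> l2" "0 \<le> l3" using h sp
        by (auto simp: Hin_def l1_def l2_def l3_def intro!: divide_nonneg_pos)
      have "l1 + l2 + l3 = (x$1 + x$2 + x$3) / 2 / \<sigma>" using sp by (simp add: l1_def l2_def l3_def field_simps)
      also have "\<dots> = \<sigma> / \<sigma>" by (simp add: \<sigma>_def)
      also have "\<dots> = 1" using sp by simp
      finally show "l1 + l2 + l3 = 1" .
    qed
    moreover have "x = (1 - \<sigma>) *\<^sub>R 0 + \<sigma> *\<^sub>R m"
    proof -
      have m1: "m$1 = l1 + l2" "m$2 = l1 + l3" "m$3 = l2 + l3" by (simp_all add: m_def e_vals)
      have "\<sigma> * (l1 + l2) = x$1" "\<sigma> * (l1 + l3) = x$2" "\<sigma> * (l2 + l3) = x$3"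
        using sp by (simp_all add: l1_def l2_def l3_def field_simps)
      then show ?thesis using m1 by (simp add: vec_eq_iff forall_3)
    qed
    ultimately show ?thesis unfolding eq using s01 by (intro CollectI exI[of _ "1-\<sigma>"] exI[of _ \<sigma>]) auto
  qed
qed

lemma cubo:
  assumes "Hin x" "Hin y"
  shows "\<bar>y$1 - x$1\<bar> + \<bar>y$2 - x$2\<bar> + \<bar>y$3 - x$3\<bar> \<le> 2"
    "\<bar>y$1 - x$1\<bar> \<le> 1" "\<bar>y$2 - x$2\<bar> \<le> 1" "\<bar>y$3 - x$3\<bar> \<le> 1"
  using assms unfolding Hin_def by (auto simp: abs_if)

lemma key_bound:
  assumes abc: "1/2 \<le> a" "a < 1" "1/2 \<le> b" "b < 1" "1/2 \<le> c" "c < 1" "a + b + c = 2"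
    and h: "Hin x" "Hin y" and t: "t > 0" and d: "y - x = t *\<^sub>R lv a b c A B C"
    and par: "even (A+B)" "even (B+C)" and nz: "A \<noteq> 0 \<or> B \<noteq> 0 \<or> C \<noteq> 0"
  shows "t \<le> 1"
proof -
  define X where "X = a * of_int A"
  define Y where "Y = b * of_int B"
  define Z where "Z = c * of_int C"
  have d1: "\<bar>y$1 - x$1\<bar> = t * \<bar>X\<bar>" and d2: "\<bar>y$2 - x$2\<bar> = t * \<bar>Y\<bar>" and d3: "\<bar>y$3 - x$3\<bar> = t * \<bar>Z\<bar>"
  proof -
    have "y$1 - x$1 = t * X" "y$2 - x$2 = t * Y" "y$3 - x$3 = t * Z"
      using arg_cong[OF d, of "\<lambda>v. v$1"] arg_cong[OF d, of "\<lambda>v. v$2"] arg_cong[OF d, of "\<lambda>v. v$3"]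
      by (simp_all add: lv_def X_def Y_def Z_def)
    then show "\<bar>y$1 - x$1\<bar> = t * \<bar>X\<bar>" "\<bar>y$2 - x$2\<bar> = t * \<bar>Y\<bar>" "\<bar>y$3 - x$3\<bar> = t * \<bar>Z\<bar>"
      using t by (simp_all add: abs_mult)
  qed
  note cb = cubo[OF h]
  show ?thesis
  proof (cases "odd A")
    case True
    then have "odd B" "odd C" using par by presburger+
    then have "A \<noteq> 0" "B \<noteq> 0" "C \<noteq> 0" using True by auto
    then have "\<bar>A\<bar> \<ge> 1" "\<bar>B\<bar> \<ge> 1" "\<bar>C\<bar> \<ge> 1" by linarith+
    then have "\<bar>X\<bar> \<ge> a * of_int 1" "\<bar>Y\<bar> \<ge> b * of_int 1" "\<bar>Z\<bar> \<ge> c * of_int 1" unfolding X_def Y_def Z_def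
      using abc by (intro abs_ge_mult; simp)+
    then have "\<bar>X\<bar> + \<bar>Y\<bar> + \<bar>Z\<bar> \<ge> 2" using abc by simp
    then have "t * 2 \<le> t * (\<bar>X\<bar> + \<bar>Y\<bar> + \<bar>Z\<bar>)" using t by (intro mult_left_mono) auto
    also have "\<dots> = \<bar>y$1 - x$1\<bar> + \<bar>y$2 - x$2\<bar> + \<bar>y$3 - x$3\<bar>" using d1 d2 d3 by (simp add: algebra_simps)
    also have "\<dots> \<le> 2" using cb(1) .
    finally show ?thesis by simp
  next
    case False
    then have ev: "even A" "even B" "even C" using par by presburger+
    have ge2: "\<bar>M\<bar> \<ge> 2" if evM: "even M" and nzM: "M \<noteq> 0" for M :: int
    proof -
      from evM obtain k where "M = 2 * k" by (rule evenE)
      moreover have "k \<noteq> 0" using nzM calculation by simp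
      ultimately show ?thesis by linarith
    qed
    have one: "t \<le> t * \<bar>V\<bar>" if "\<bar>V\<bar> \<ge> 1" for V :: real
    proof -
      have "t * 1 \<le> t * \<bar>V\<bar>" using that t by (intro mult_left_mono) auto
      then show ?thesis by simp
    qed
    consider "A \<noteq> 0" | "B \<noteq> 0" | "C \<noteq> 0" using nz by blast
    then show ?thesis
    proof cases
      case 1
      then have "\<bar>X\<bar> \<ge> a * of_int 2" unfolding X_def using ge2 ev abc by (intro abs_ge_mult) auto
      then have "\<bar>X\<bar> \<ge> 1" using abc by simp
      then show ?thesis using one[of X] d1 cb(2) by linarith
    next
      case 2
      then have "\<bar>Y\<bar> \<ge> b * of_int 2" unfolding Y_def using ge2 ev abc by (intro abs_ge_mult) auto
      then have "\<bar>Y\<bar> \<ge> 1" using abc by simp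
      then show ?thesis using one[of Y] d2 cb(3) by linarith
    next
      case 3
      then have "\<bar>Z\<bar> \<ge> c * of_int 2" unfolding Z_def using ge2 ev abc by (intro abs_ge_mult) auto
      then have "\<bar>Z\<bar> \<ge> 1" using abc by simp
      then show ?thesis using one[of Z] d3 cb(4) by linarith
    qed
  qed
qed

lemma small_tau:
  fixes l1 l2 l3 g1 g2 g3 :: real
  assumes "l1 > 0" "l2 > 0" "l3 > 0"
  shows "\<exists>\<tau>>0. 0 \<le> l1 + \<tau> * g1 \<and> 0 \<le> l2 + \<tau> * g2 \<and> 0 \<le> l3 + \<tau> * g3"
proof -
  define m where "m = min l1 (min l2 l3)"
  define S where "S = 1 + \<bar>g1\<bar> + \<bar>g2\<bar> + \<bar>g3\<bar>"
  define \<tau> where "\<tau> = m / S"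
  have mp: "m > 0" using assms by (simp add: m_def)
  have Sp: "S > 0" by (simp add: S_def add_pos_nonneg)
  have tp: "\<tau> > 0" using mp Sp by (simp add: \<tau>_def)
  have tS: "\<tau> * S = m" using Sp by (simp add: \<tau>_def)
  have b: "\<tau> * \<bar>g\<bar> \<le> m" if "\<bar>g\<bar> \<le> S" for g
  proof -
    have "\<tau> * \<bar>g\<bar> \<le> \<tau> * S" using tp that by (intro mult_left_mono) auto
    then show ?thesis using tS by simp
  qed
  have "\<tau> * \<bar>g1\<bar> \<le> m" "\<tau> * \<bar>g2\<bar> \<le> m" "\<tau> * \<bar>g3\<bar> \<le> m" by (rule b, simp add: S_def)+
  moreover have "\<bar>\<tau> * g1\<bar> = \<tau> * \<bar>g1\<bar>" "\<bar>\<tau> * g2\<bar> = \<tau> * \<bar>g2\<bar>" "\<bar>\<tau> * g3\<bar> = \<tau> * \<bar>g3\<bar>"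
    using tp by (simp_all add: abs_mult)
  moreover have "m \<le> l1" "m \<le> l2" "m \<le> l3" by (simp_all add: m_def)
  ultimately show ?thesis using tp by (intro exI[of _ \<tau>]) (auto simp: abs_le_iff)
qed

lemma case0:
  assumes abc: "1/2 \<le> a" "a < 1" "1/2 \<le> b" "b < 1" "1/2 \<le> c" "c < 1" "a + b + c = 2"
    and p: "p$1 + p$2 + p$3 > 2"
  shows "\<exists>f t s. Hin f \<and> 0 \<le> t \<and> t \<le> 1 \<and> s > 1 \<and> (1-t) *\<^sub>R f + t *\<^sub>R p = s *\<^sub>R vector [a,b,c]"
proof -
  define \<sigma> where "\<sigma> = p$1 + p$2 + p$3"
  define g :: "real^3" where "g = (\<sigma>/2) *\<^sub>R vector [a,b,c] - p"
  obtain \<tau> where tau: "\<tau> > 0" "0 \<le> (b + c - a) + \<tau> * (g$2 + g$3 - g$1)"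
    "0 \<le> (a + c - b) + \<tau> * (g$1 + g$3 - g$2)" "0 \<le> (a + b - c) + \<tau> * (g$1 + g$2 - g$3)"
    using small_tau[of "b + c - a" "a + c - b" "a + b - c"] abc by force
  define f where "f = vector [a,b,c] + \<tau> *\<^sub>R g"
  have "g$1 + g$2 + g$3 = (\<sigma>/2) * (a + b + c) - (p$1 + p$2 + p$3)" by (simp add: g_def algebra_simps)
  also have "\<dots> = 0" using abc by (simp add: \<sigma>_def)
  finally have gs: "g$1 + g$2 + g$3 = 0" .
  have Hf: "Hin f" unfolding Hin_def f_def
    using tau gs abc by (simp add: algebra_simps) (smt (verit) distrib_left)
  define t where "t = \<tau> / (1 + \<tau>)"
  define s where "s = (1 + \<tau> * \<sigma> / 2) / (1 + \<tau>)"
  have t01: "0 \<le> t" "t \<le> 1" using tau by (auto simp: t_def)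
  have s1: "s > 1"
  proof -
    have "\<tau> * 1 < \<tau> * (\<sigma> / 2)" using tau p by (intro mult_strict_left_mono) (auto simp: \<sigma>_def)
    then show ?thesis using tau by (simp add: s_def field_simps)
  qed
  have h1: "(1-t)*(1+\<tau>) = 1" "t*(1+\<tau>) = \<tau>" "s*(1+\<tau>) = 1 + \<tau>*\<sigma>/2"
    using tau by (simp_all add: t_def s_def field_simps)
  have comb: "(1 - t) * (ci + \<tau> * (\<sigma> * ci / 2 - pi)) + t * pi = s * ci" for ci pi :: real
  proof -
    have "((1 - t) * (ci + \<tau> * (\<sigma> * ci / 2 - pi)) + t * pi) * (1+\<tau>)
       = ((1-t)*(1+\<tau>)) * (ci + \<tau> * (\<sigma> * ci / 2 - pi)) + (t*(1+\<tau>)) * pi" by (simp add: algebra_simps)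
    also have "\<dots> = (1 + \<tau>*\<sigma>/2) * ci" unfolding h1 by (simp add: algebra_simps)
    also have "\<dots> = (s * ci) * (1+\<tau>)" using h1(3) by (simp add: algebra_simps)
    finally show ?thesis using tau by simp
  qed
  have "(1-t) *\<^sub>R f + t *\<^sub>R p = s *\<^sub>R vector [a,b,c]"
    by (simp add: vec_eq_iff forall_3 f_def g_def comb)
  then show ?thesis using Hf t01 s1 by blast
qed

abbreviation D0 :: "(real^3) set" where
  "D0 \<equiv> convex hull {0, e 1 + e 2, e 1 + e 3, e 2 + e 3}"

lemma finish:
  assumes abc: "1/2 \<le> a" "1/2 \<le> b" "1/2 \<le> c"
    and C: "convex_body C'" "D0 \<subseteq> C'" "p \<in> C'"
    and f: "Hin f" and t: "0 \<le> t" "t \<le> 1" and x: "x \<in> D0" and y: "y = (1-t) *\<^sub>R f + t *\<^sub>R p"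
    and w: "w \<in> LL a b c" "w \<noteq> 0" and s: "s > 1" "y - x = s *\<^sub>R w"
  shows "lattice_diam (LL a b c) C' > 1"
proof -
  have a0: "a > 0" "b > 0" "c > 0" using abc by auto
  have cvx: "convex C'" and bnd: "bounded C'" using C(1) by (auto simp: convex_body_def compact_imp_bounded)
  obtain R where R: "\<And>z. z \<in> C' \<Longrightarrow> norm z \<le> R" using bnd by (auto simp: bounded_iff)
  have fC: "f \<in> C'" using Hin_Dl[OF f] C(2) by blast
  have yC: "y \<in> C'" unfolding y using cvx fC C(3) t by (intro convexD) auto
  have xC: "x \<in> C'" using x C(2) by blast
  have seg: "lattice_segment (LL a b c) x y" unfolding lattice_segment_def
    using w s by (intro conjI bexI[of _ w]) (auto)
  have segC: "closed_segment x y \<subseteq> C'" by (rule closed_segment_subset[OF xC yC cvx])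
  define S where "S = {lattice_length (LL a b c) a' b' | a' b'.
       lattice_segment (LL a b c) a' b' \<and> closed_segment a' b' \<subseteq> C'}"
  have mem: "lattice_length (LL a b c) x y \<in> S" unfolding S_def using seg segC by blast
  have ge: "lattice_length (LL a b c) x y \<ge> s"
    using LL_length[OF a0 seg] w s by auto
  have bdd: "bdd_above S"
  proof (rule bdd_aboveI[of _ "4 * R"])
    fix z assume "z \<in> S"
    then obtain a' b' where z: "z = lattice_length (LL a b c) a' b'" and sg: "lattice_segment (LL a b c) a' b'"
      and sC: "closed_segment a' b' \<subseteq> C'" unfolding S_def by blast
    have aC: "a' \<in> C'" "b' \<in> C'" using sC ends_in_segment by blast+
    obtain P s0 where P: "P \<in> LL a b c" "P \<noteq> 0" "s0 > 0" "b' - a' = s0 *\<^sub>R P" "lattice_length (LL a b c) a' b' = s0"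
      using LL_length[OF a0 sg] by blast
    have nP: "norm P \<ge> 1/2" by (rule LL_norm[OF abc P(1,2)])
    have "norm (b' - a') = s0 * norm P" using P by simp
    moreover have "norm (b' - a') \<le> 2 * R" using R[OF aC(1)] R[OF aC(2)] norm_triangle_ineq4[of b' a'] by linarith
    moreover have "s0 * (1/2) \<le> s0 * norm P" using P(3) nP by (intro mult_left_mono) auto
    ultimately show "z \<le> 4 * R" using z P(5) by linarith
  qed
  have "lattice_length (LL a b c) x y \<le> lattice_diam (LL a b c) C'"
    unfolding lattice_diam_def S_def[symmetric] by (rule cSup_upper[OF mem bdd])
  then show ?thesis using ge s by linarith
qed

lemma diam_D0:
  assumes abc: "1/2 \<le> a" "a < 1" "1/2 \<le> b" "b < 1" "1/2 \<le> c" "c < 1" "a + b + c = 2"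
  shows "lattice_diam (LL a b c) D0 \<le> 1"
  unfolding lattice_diam_def
proof (rule cSup_least)
  define cv :: "real^3" where "cv = vector [a,b,c]"
  have cvL: "cv \<in> LL a b c" unfolding memL cv_def
    by (intro exI[of _ 1] conjI) (auto simp: lv_def)
  have cv0: "cv \<noteq> 0" using abc by (auto simp: cv_def vec_eq_iff forall_3)
  have "Hin cv" using abc by (simp add: Hin_def cv_def)
  then have "cv \<in> D0" by (rule Hin_Dl)
  moreover have "0 \<in> D0" by (simp add: hull_inc)
  ultimately have "closed_segment 0 cv \<subseteq> D0" by (intro closed_segment_subset) auto
  moreover have "lattice_segment (LL a b c) 0 cv" unfolding lattice_segment_def
    using cvL cv0 by (intro conjI bexI[of _ cv]) (auto intro: exI[of _ 1])
  ultimately show "{lattice_length (LL a b c) a' b' | a' b'. lattice_segment (LL a b c) a' b' \<and> closed_segment a' b' \<subseteq> D0} \<noteq> {}"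
    by blast
next
  fix z assume "z \<in> {lattice_length (LL a b c) a' b' | a' b'. lattice_segment (LL a b c) a' b' \<and> closed_segment a' b' \<subseteq> D0}"
  then obtain x y where z: "z = lattice_length (LL a b c) x y" and sg: "lattice_segment (LL a b c) x y"
    and sC: "closed_segment x y \<subseteq> D0" by blast
  have h: "Hin x" "Hin y" using sC ends_in_segment Dl_Hin by blast+
  have a0: "a > 0" "b > 0" "c > 0" using abc by auto
  obtain P s0 where P: "P \<in> LL a b c" "P \<noteq> 0" "s0 > 0" "y - x = s0 *\<^sub>R P" "lattice_length (LL a b c) x y = s0"
    using LL_length[OF a0 sg] by blast
  obtain A B C where ABC: "even (A+B)" "even (B+C)" "P = lv a b c A B C" using P(1) unfolding memL by blast
  have nz: "A \<noteq> 0 \<or> B \<noteq> 0 \<or> C \<noteq> 0" using P(2) ABC(3) by (auto simp: lv_def vec_eq_iff forall_3)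
  have "s0 \<le> 1" by (rule key_bound[OF abc h P(3) _ ABC(1,2) nz]) (use P ABC in simp)
  then show "z \<le> 1" using z P by simp
qed

theorem proposition4p10:
  fixes \<alpha> \<beta> \<gamma> :: real
  assumes "1/2 \<le> \<alpha>" "\<alpha> < 1" "1/2 \<le> \<beta>" "\<beta> < 1" "1/2 \<le> \<gamma>" "\<gamma> < 1"
    and "\<alpha> + \<beta> + \<gamma> = 2"
  shows "lattice_complete
           (int_span3 (vector [-\<alpha>, \<beta>, \<gamma>]) (vector [\<alpha>, -\<beta>, \<gamma>]) (vector [\<alpha>, \<beta>, -\<gamma>]))
           (convex hull {0, e 1 + e 2, e 1 + e 3, e 2 + e 3})"
  unfolding lattice_complete_def
proof
  assume "\<exists>C'. convex_body C' \<and> D0 \<subset> C' \<and> lattice_diam (LL \<alpha> \<beta> \<gamma>) C' = lattice_diam (LL \<alpha> \<beta> \<gamma>) D0"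
  then obtain C' where C: "convex_body C'" "D0 \<subseteq> C'" and ne: "D0 \<noteq> C'"
    and eq: "lattice_diam (LL \<alpha> \<beta> \<gamma>) C' = lattice_diam (LL \<alpha> \<beta> \<gamma>) D0" by blast
  note ab = assms(1,3,5)
  obtain p where pC: "p \<in> C'" and pD: "p \<notin> D0" using C(2) ne by blast
  have nH: "\<not> Hin p" using pD Hin_Dl by blast
  have "p$1 + p$2 + p$3 > 2 \<or> p$2 + p$3 - p$1 < 0 \<or> p$1 + p$3 - p$2 < 0 \<or> p$1 + p$2 - p$3 < 0"
    using nH unfolding Hin_def by linarith
  then have "lattice_diam (LL \<alpha> \<beta> \<gamma>) C' > 1"
  proof (elim disjE)
    assume q: "p$1 + p$2 + p$3 > 2"
    then obtain f t s where F: "Hin f" "0 \<le> t" "t \<le> 1" "s > 1"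
      and E: "(1-t) *\<^sub>R f + t *\<^sub>R p = s *\<^sub>R vector [\<alpha>,\<beta>,\<gamma>]"
      using case0[OF assms] by blast
    have xD: "0 \<in> D0" by (simp add: hull_inc)
    have wL: "lv \<alpha> \<beta> \<gamma> 1 1 1 \<in> LL \<alpha> \<beta> \<gamma>" by (rule lv_in) simp_all
    have w0: "lv \<alpha> \<beta> \<gamma> 1 1 1 \<noteq> 0" using assms by (auto simp: lv_def vec_eq_iff forall_3)
    have dy: "((1-t) *\<^sub>R f + t *\<^sub>R p) - 0 = s *\<^sub>R lv \<alpha> \<beta> \<gamma> 1 1 1"
      using E by (simp add: lv_def)
    show ?thesis by (rule finish[OF ab(1,2,3) C pC F(1,2,3) xD refl wL w0 F(4) dy])

  next
    assume q: "p$2 + p$3 - p$1 < 0"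
    define p' :: "real^3" where "p' = vector [p$1, 1 - p$2, 1 - p$3]"
    have "p'$1 + p'$2 + p'$3 > 2" using q by (simp add: p'_def)
    then obtain f' t s where F: "Hin f'" "0 \<le> t" "t \<le> 1" "s > 1"
      and E: "(1-t) *\<^sub>R f' + t *\<^sub>R p' = s *\<^sub>R vector [\<alpha>,\<beta>,\<gamma>]"
      using case0[OF assms] by blast
    have E1: "(1-t) * f'$1 + t * p'$1 = s * \<alpha>" using arg_cong[OF E, of "\<lambda>v. v$1"] by simp
    have E2: "(1-t) * f'$2 + t * p'$2 = s * \<beta>" using arg_cong[OF E, of "\<lambda>v. v$2"] by simp
    have E3: "(1-t) * f'$3 + t * p'$3 = s * \<gamma>" using arg_cong[OF E, of "\<lambda>v. v$3"] by simp
    define f :: "real^3" where "f = vector [f'$1, 1 - f'$2, 1 - f'$3]"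
    have Hf: "Hin f" using F(1) by (simp add: Hin_def f_def; linarith)
    have xD: "e 2 + e 3 \<in> D0" by (simp add: hull_inc)
    have wL: "lv \<alpha> \<beta> \<gamma> 1 (-1) (-1) \<in> LL \<alpha> \<beta> \<gamma>" by (rule lv_in) simp_all
    have w0: "lv \<alpha> \<beta> \<gamma> 1 (-1) (-1) \<noteq> 0" using assms by (auto simp: lv_def vec_eq_iff forall_3)
    have dy: "((1-t) *\<^sub>R f + t *\<^sub>R p) - (e 2 + e 3) = s *\<^sub>R lv \<alpha> \<beta> \<gamma> 1 (-1) (-1)"
      using E1 E2 E3 unfolding e_vals by (simp add: vec_eq_iff forall_3 f_def p'_def lv_def algebra_simps)
    show ?thesis by (rule finish[OF ab(1,2,3) C pC Hf F(2,3) xD refl wL w0 F(4) dy])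

  next
    assume q: "p$1 + p$3 - p$2 < 0"
    define p' :: "real^3" where "p' = vector [1 - p$1, p$2, 1 - p$3]"
    have "p'$1 + p'$2 + p'$3 > 2" using q by (simp add: p'_def)
    then obtain f' t s where F: "Hin f'" "0 \<le> t" "t \<le> 1" "s > 1"
      and E: "(1-t) *\<^sub>R f' + t *\<^sub>R p' = s *\<^sub>R vector [\<alpha>,\<beta>,\<gamma>]"
      using case0[OF assms] by blast
    have E1: "(1-t) * f'$1 + t * p'$1 = s * \<alpha>" using arg_cong[OF E, of "\<lambda>v. v$1"] by simp
    have E2: "(1-t) * f'$2 + t * p'$2 = s * \<beta>" using arg_cong[OF E, of "\<lambda>v. v$2"] by simp
    have E3: "(1-t) * f'$3 + t * p'$3 = s * \<gamma>" using arg_cong[OF E, of "\<lambda>v. v$3"] by simp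
    define f :: "real^3" where "f = vector [1 - f'$1, f'$2, 1 - f'$3]"
    have Hf: "Hin f" using F(1) by (simp add: Hin_def f_def; linarith)
    have xD: "e 1 + e 3 \<in> D0" by (simp add: hull_inc)
    have wL: "lv \<alpha> \<beta> \<gamma> (-1) 1 (-1) \<in> LL \<alpha> \<beta> \<gamma>" by (rule lv_in) simp_all
    have w0: "lv \<alpha> \<beta> \<gamma> (-1) 1 (-1) \<noteq> 0" using assms by (auto simp: lv_def vec_eq_iff forall_3)
    have dy: "((1-t) *\<^sub>R f + t *\<^sub>R p) - (e 1 + e 3) = s *\<^sub>R lv \<alpha> \<beta> \<gamma> (-1) 1 (-1)"
      using E1 E2 E3 unfolding e_vals by (simp add: vec_eq_iff forall_3 f_def p'_def lv_def algebra_simps)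
    show ?thesis by (rule finish[OF ab(1,2,3) C pC Hf F(2,3) xD refl wL w0 F(4) dy])

  next
    assume q: "p$1 + p$2 - p$3 < 0"
    define p' :: "real^3" where "p' = vector [1 - p$1, 1 - p$2, p$3]"
    have "p'$1 + p'$2 + p'$3 > 2" using q by (simp add: p'_def)
    then obtain f' t s where F: "Hin f'" "0 \<le> t" "t \<le> 1" "s > 1"
      and E: "(1-t) *\<^sub>R f' + t *\<^sub>R p' = s *\<^sub>R vector [\<alpha>,\<beta>,\<gamma>]"
      using case0[OF assms] by blast
    have E1: "(1-t) * f'$1 + t * p'$1 = s * \<alpha>" using arg_cong[OF E, of "\<lambda>v. v$1"] by simp
    have E2: "(1-t) * f'$2 + t * p'$2 = s * \<beta>" using arg_cong[OF E, of "\<lambda>v. v$2"] by simp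
    have E3: "(1-t) * f'$3 + t * p'$3 = s * \<gamma>" using arg_cong[OF E, of "\<lambda>v. v$3"] by simp
    define f :: "real^3" where "f = vector [1 - f'$1, 1 - f'$2, f'$3]"
    have Hf: "Hin f" using F(1) by (simp add: Hin_def f_def; linarith)
    have xD: "e 1 + e 2 \<in> D0" by (simp add: hull_inc)
    have wL: "lv \<alpha> \<beta> \<gamma> (-1) (-1) 1 \<in> LL \<alpha> \<beta> \<gamma>" by (rule lv_in) simp_all
    have w0: "lv \<alpha> \<beta> \<gamma> (-1) (-1) 1 \<noteq> 0" using assms by (auto simp: lv_def vec_eq_iff forall_3)
    have dy: "((1-t) *\<^sub>R f + t *\<^sub>R p) - (e 1 + e 2) = s *\<^sub>R lv \<alpha> \<beta> \<gamma> (-1) (-1) 1"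
      using E1 E2 E3 unfolding e_vals by (simp add: vec_eq_iff forall_3 f_def p'_def lv_def algebra_simps)
    show ?thesis by (rule finish[OF ab(1,2,3) C pC Hf F(2,3) xD refl wL w0 F(4) dy])

  qed
  moreover have "lattice_diam (LL \<alpha> \<beta> \<gamma>) D0 \<le> 1" by (rule diam_D0[OF assms])
  ultimately show False using eq by simp
qed

end
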